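(* Let $(G,\ell)$ be a group with an invariant $\Lambda$-valued pseudo-norm. Then $(G,\ell)$ is metrically LEF if and only if $G^{\square,\mathbb Q}$ has the finite model property for existential sentences with respect to $T_{IPMG}$. If $\ell$ is a norm, then $(G,\ell)$ is metrically LEF if and only if $G^{\square,\mathbb Q}$ has the finite model property for existential sentences with respect to $T_{IMG}$.
   Context: $\Lambda$ is a closed convex subset of $[0,\infty)$ containing $0$. A pseudo-norm on $G$ is $\ell:G\to\Lambda$ with $\ell(1)=0$, $\ell(g)=\ell(g^{-1})$, $\ell(gh)\le\ell(g)+\ell(h)$; a norm if $\ell(g)=0\Rightarrow g=1$; invariant if $\ell(h^{-1}gh)=\ell(g)$. $L^{\square,\mathbb Q}$ is the language of groups $(\cdot,{}^{-1},1)$ plus unary predicates $R^{\square\varepsilon}$, $\square\in\{<,>,=\}$, $\varepsilon\in\Lambda\cap\mathbb Q$; $G^{\square,\mathbb Q}$ is the group $G$ with $R^{\square\varepsilon}(g)$ interpreted as $\ell(g)\,\square\,\varepsilon$. $T_{IPMG}$ is the $L^{\square,\mathbb Q}$-theory whose models are the groups $M$ with predicates such that: for every $a\in M$ and $\varepsilon\in\Lambda\cap\mathbb Q$ exactly one of $R^{<\varepsilon}(a),R^{=\varepsilon}(a),R^{>\varepsilon}(a)$ holds (write $f(a,\varepsilon)$ for that symbol); for $q\le q'$ in $\Lambda\cap\mathbb Q$, $f(g,q)\in\{<,=\}\Rightarrow f(g,q')\in\{<,=\}$ and $f(g,q')\in\{>,=\}\Rightarrow f(g,q)\in\{>,=\}$;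 $f(1,0)$ is $=$ and $f(g,0)\in\{=,>\}$ for all $g$; $f(g,q)=f(g^{-1},q)$; if $f(g,q),f(g',q')\in\{<,=\}$ and $q+q'\in\Lambda$ then $f(gg',q+q')\in\{<,=\}$; and $f(hgh^{-1},q)=f(g,q)$. $T_{IMG}$ is $T_{IPMG}$ together with: $f(g,0)\in\{<,=\}\Rightarrow g=1$. A structure $M$ has the finite model property for existential sentences with respect to a theory $T$ if every existential $L^{\square,\mathbb Q}$-sentence true in $M$ is true in some finite model of $T$. $(G,\ell)$ is metrically LEF if for every finite $D\subseteq G$ and finite $Q\subseteq\Lambda\cap\mathbb Q$ with $0\in Q$ there are a finite group $C$ with invariant $\Lambda$-valued pseudo-norm $\ell_C$ and a map $\varphi:G\to C$ injective on $D$ with $\varphi(hg)=\varphi(h)\varphi(g)$ whenever $h,g,hg\in D$ and $\ell(g)\,\square\,q\iff\ell_C(\varphi(g))\,\square\,q$ for all $g\in D,q\in Q,\square$. *)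

theory Defs
  imports Complex_Main "HOL-Analysis.Convex" "HOL-Algebra.Group"
begin

definition inv_pseudo_norm :: "real set \<Rightarrow> ('a, 'b) monoid_scheme \<Rightarrow> ('a \<Rightarrow> real) \<Rightarrow> bool" where
  "inv_pseudo_norm Lam G l \<longleftrightarrow>
     (\<forall>g\<in>carrier G. l g \<in> Lam) \<and>
     l \<one>\<^bsub>G\<^esub> = 0 \<and>
     (\<forall>g\<in>carrier G. l g = l (inv\<^bsub>G\<^esub> g)) \<and>
     (\<forall>g\<in>carrier G. \<forall>h\<in>carrier G. l (g \<otimes>\<^bsub>G\<^esub> h) \<le> l g + l h) \<and>
     (\<forall>g\<in>carrier G. \<forall>h\<in>carrier G. l (inv\<^bsub>G\<^esub> h \<otimes>\<^bsub>G\<^esub> g \<otimes>\<^bsub>G\<^esub> h) = l g)"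

definition is_norm_on :: "('a, 'b) monoid_scheme \<Rightarrow> ('a \<Rightarrow> real) \<Rightarrow> bool" where
  "is_norm_on G l \<longleftrightarrow> (\<forall>g\<in>carrier G. l g = 0 \<longrightarrow> g = \<one>\<^bsub>G\<^esub>)"

datatype cmp = Lt | EqC | Gt

fun cmpr :: "cmp \<Rightarrow> real \<Rightarrow> real \<Rightarrow> bool" where
  "cmpr Lt x y = (x < y)"
| "cmpr EqC x y = (x = y)"
| "cmpr Gt x y = (x > y)"

datatype trm = Var nat | One | Mul trm trm | Inv trm

text \<open>Quantifier-free formulas; Rel c q t stands for the atom R^{c q}(t).\<close>
datatype qf = TT | FF | Eqt trm trm | Rel cmp rat trm | Neg qf | Conj qf qf | Disj qf qf

text \<open>Predicate symbols R^{c q} exist only for q in Lambda \<inter> Q.\<close>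
fun wf_qf :: "real set \<Rightarrow> qf \<Rightarrow> bool" where
  "wf_qf Lam TT = True"
| "wf_qf Lam FF = True"
| "wf_qf Lam (Eqt s t) = True"
| "wf_qf Lam (Rel c q t) = (of_rat q \<in> Lam)"
| "wf_qf Lam (Neg p) = wf_qf Lam p"
| "wf_qf Lam (Conj p r) = (wf_qf Lam p \<and> wf_qf Lam r)"
| "wf_qf Lam (Disj p r) = (wf_qf Lam p \<and> wf_qf Lam r)"

text \<open>An L-structure: a monoid-record G (group operations) and an interpretation
  P c q of the unary predicate R^{c q}.\<close>
fun eval_trm :: "('a, 'b) monoid_scheme \<Rightarrow> (nat \<Rightarrow> 'a) \<Rightarrow> trm \<Rightarrow> 'a" where
  "eval_trm G e (Var i) = e i"
| "eval_trm G e One = \<one>\<^bsub>G\<^esub>"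
| "eval_trm G e (Mul s t) = eval_trm G e s \<otimes>\<^bsub>G\<^esub> eval_trm G e t"
| "eval_trm G e (Inv t) = inv\<^bsub>G\<^esub> (eval_trm G e t)"

fun sat_qf :: "('a, 'b) monoid_scheme \<Rightarrow> (cmp \<Rightarrow> rat \<Rightarrow> 'a \<Rightarrow> bool) \<Rightarrow> (nat \<Rightarrow> 'a) \<Rightarrow> qf \<Rightarrow> bool" where
  "sat_qf G P e TT = True"
| "sat_qf G P e FF = False"
| "sat_qf G P e (Eqt s t) = (eval_trm G e s = eval_trm G e t)"
| "sat_qf G P e (Rel c q t) = P c q (eval_trm G e t)"
| "sat_qf G P e (Neg p) = (\<not> sat_qf G P e p)"
| "sat_qf G P e (Conj p r) = (sat_qf G P e p \<and> sat_qf G P e r)"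
| "sat_qf G P e (Disj p r) = (sat_qf G P e p \<or> sat_qf G P e r)"

text \<open>The existential sentence obtained by existentially quantifying all variables
  of the quantifier-free matrix p holds in the structure (G,P).\<close>
definition ex_holds :: "('a, 'b) monoid_scheme \<Rightarrow> (cmp \<Rightarrow> rat \<Rightarrow> 'a \<Rightarrow> bool) \<Rightarrow> qf \<Rightarrow> bool" where
  "ex_holds G P p \<longleftrightarrow> (\<exists>e. range e \<subseteq> carrier G \<and> sat_qf G P e p)"

text \<open>The structure G^{square,Q} induced by a pseudo-norm.\<close>
definition norm_pred :: "('a \<Rightarrow> real) \<Rightarrow> cmp \<Rightarrow> rat \<Rightarrow> 'a \<Rightarrow> bool" where
  "norm_pred l c q g \<longleftrightarrow> cmpr c (l g) (of_rat q)"

definition le_pred :: "(cmp \<Rightarrow> rat \<Rightarrow> 'a \<Rightarrow> bool) \<Rightarrow> rat \<Rightarrow> 'a \<Rightarrow> bool" where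
  "le_pred P q g \<longleftrightarrow> P Lt q g \<or> P EqC q g"

definition ge_pred :: "(cmp \<Rightarrow> rat \<Rightarrow> 'a \<Rightarrow> bool) \<Rightarrow> rat \<Rightarrow> 'a \<Rightarrow> bool" where
  "ge_pred P q g \<longleftrightarrow> P Gt q g \<or> P EqC q g"

definition model_IPMG :: "real set \<Rightarrow> ('a, 'b) monoid_scheme \<Rightarrow> (cmp \<Rightarrow> rat \<Rightarrow> 'a \<Rightarrow> bool) \<Rightarrow> bool" where
  "model_IPMG Lam M P \<longleftrightarrow> group M \<and>
    (\<forall>a\<in>carrier M. \<forall>q. of_rat q \<in> Lam \<longrightarrow>
        ((P Lt q a \<and> \<not> P EqC q a \<and> \<not> P Gt q a) \<or>
         (\<not> P Lt q a \<and> P EqC q a \<and> \<not> P Gt q a) \<or>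
         (\<not> P Lt q a \<and> \<not> P EqC q a \<and> P Gt q a))) \<and>
    (\<forall>g\<in>carrier M. \<forall>q q'. of_rat q \<in> Lam \<longrightarrow> of_rat q' \<in> Lam \<longrightarrow> q \<le> q' \<longrightarrow>
        (le_pred P q g \<longrightarrow> le_pred P q' g) \<and> (ge_pred P q' g \<longrightarrow> ge_pred P q g)) \<and>
    P EqC 0 \<one>\<^bsub>M\<^esub> \<and>
    (\<forall>g\<in>carrier M. ge_pred P 0 g) \<and>
    (\<forall>g\<in>carrier M. \<forall>q c. of_rat q \<in> Lam \<longrightarrow> (P c q g \<longleftrightarrow> P c q (inv\<^bsub>M\<^esub> g))) \<and>
    (\<forall>g\<in>carrier M. \<forall>g'\<in>carrier M. \<forall>q q'. of_rat q \<in> Lam \<longrightarrow> of_rat q' \<in> Lam \<longrightarrow>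
        of_rat (q + q') \<in> Lam \<longrightarrow> le_pred P q g \<longrightarrow> le_pred P q' g' \<longrightarrow>
        le_pred P (q + q') (g \<otimes>\<^bsub>M\<^esub> g')) \<and>
    (\<forall>g\<in>carrier M. \<forall>h\<in>carrier M. \<forall>q c. of_rat q \<in> Lam \<longrightarrow>
        (P c q (h \<otimes>\<^bsub>M\<^esub> g \<otimes>\<^bsub>M\<^esub> inv\<^bsub>M\<^esub> h) \<longleftrightarrow> P c q g))"

definition model_IMG :: "real set \<Rightarrow> ('a, 'b) monoid_scheme \<Rightarrow> (cmp \<Rightarrow> rat \<Rightarrow> 'a \<Rightarrow> bool) \<Rightarrow> bool" where
  "model_IMG Lam M P \<longleftrightarrow> model_IPMG Lam M P \<and>
    (\<forall>g\<in>carrier M. le_pred P 0 g \<longrightarrow> g = \<one>\<^bsub>M\<^esub>)"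

text \<open>Finite models are taken with carrier in nat (every finite
  structure is isomorphic to one such, and truth is isomorphism invariant).\<close>
definition fmp_exist ::
  "real set \<Rightarrow> (nat monoid \<Rightarrow> (cmp \<Rightarrow> rat \<Rightarrow> nat \<Rightarrow> bool) \<Rightarrow> bool)
    \<Rightarrow> ('a, 'b) monoid_scheme \<Rightarrow> (cmp \<Rightarrow> rat \<Rightarrow> 'a \<Rightarrow> bool) \<Rightarrow> bool" where
  "fmp_exist Lam Mod G P \<longleftrightarrow>
     (\<forall>p. wf_qf Lam p \<longrightarrow> ex_holds G P p \<longrightarrow>
        (\<exists>(M :: nat monoid) PM. finite (carrier M) \<and> Mod M PM \<and> ex_holds M PM p))"

definition metrically_LEF :: "real set \<Rightarrow> ('a, 'b) monoid_scheme \<Rightarrow> ('a \<Rightarrow> real) \<Rightarrow> bool" where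
  "metrically_LEF Lam G l \<longleftrightarrow>
    (\<forall>D Q. D \<subseteq> carrier G \<longrightarrow> finite D \<longrightarrow> finite Q \<longrightarrow> (\<forall>q\<in>Q. of_rat q \<in> Lam) \<longrightarrow> 0 \<in> Q \<longrightarrow>
      (\<exists>(C :: nat monoid) lC \<phi>. group C \<and> finite (carrier C) \<and> inv_pseudo_norm Lam C lC \<and>
         \<phi> \<in> carrier G \<rightarrow> carrier C \<and> inj_on \<phi> D \<and>
         (\<forall>h\<in>D. \<forall>g\<in>D. h \<otimes>\<^bsub>G\<^esub> g \<in> D \<longrightarrow> \<phi> (h \<otimes>\<^bsub>G\<^esub> g) = \<phi> h \<otimes>\<^bsub>C\<^esub> \<phi> g) \<and>
         (\<forall>g\<in>D. \<forall>q\<in>Q. \<forall>c. cmpr c (l g) (of_rat q) \<longleftrightarrow> cmpr c (lC (\<phi> g)) (of_rat q))))"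

end

theory Submission
  imports Defs "HOL-Analysis.Elementary_Metric_Spaces"
begin


fun subtrms :: "trm \<Rightarrow> trm set" where
  "subtrms (Var i) = {Var i}"
| "subtrms One = {One}"
| "subtrms (Mul s t) = insert (Mul s t) (subtrms s \<union> subtrms t)"
| "subtrms (Inv t) = insert (Inv t) (subtrms t)"

fun qtrms :: "qf \<Rightarrow> trm set" where
  "qtrms TT = {}"
| "qtrms FF = {}"
| "qtrms (Eqt s t) = subtrms s \<union> subtrms t"
| "qtrms (Rel c q t) = subtrms t"
| "qtrms (Neg p) = qtrms p"
| "qtrms (Conj p r) = qtrms p \<union> qtrms r"
| "qtrms (Disj p r) = qtrms p \<union> qtrms r"

fun qrats :: "qf \<Rightarrow> rat set" where
  "qrats TT = {}"
| "qrats FF = {}"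
| "qrats (Eqt s t) = {}"
| "qrats (Rel c q t) = {q}"
| "qrats (Neg p) = qrats p"
| "qrats (Conj p r) = qrats p \<union> qrats r"
| "qrats (Disj p r) = qrats p \<union> qrats r"

lemma finite_subtrms: "finite (subtrms t)" by (induction t) auto
lemma finite_qtrms: "finite (qtrms p)" by (induction p) (auto simp: finite_subtrms)
lemma finite_qrats: "finite (qrats p)" by (induction p) auto
lemma self_subtrms: "t \<in> subtrms t" by (cases t) auto
lemma wf_qrats: "wf_qf Lam p \<Longrightarrow> q \<in> qrats p \<Longrightarrow> of_rat q \<in> Lam"
  by (induction p) auto

lemma eval_carrier:
  assumes "group G" "range e \<subseteq> carrier G"
  shows "eval_trm G e t \<in> carrier G"
  using assms by (induction t) (auto simp: group.inv_closed monoid.m_closed group.is_monoid)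

lemma cmpr_transfer:
  fixes x y q :: real
  assumes "x < q \<Longrightarrow> y < q" "x = q \<Longrightarrow> y = q" "x > q \<Longrightarrow> y > q"
  shows "cmpr c x q = cmpr c y q"
  using assms by (cases c) (auto, (meson linorder_neqE_linordered_idom less_asym)+)

lemma phi_one:
  assumes "group C" "\<phi> \<in> carrier G \<rightarrow> carrier C" "monoid G" "\<one>\<^bsub>G\<^esub> \<in> D"
    "\<forall>h\<in>D. \<forall>g\<in>D. h \<otimes>\<^bsub>G\<^esub> g \<in> D \<longrightarrow> \<phi> (h \<otimes>\<^bsub>G\<^esub> g) = \<phi> h \<otimes>\<^bsub>C\<^esub> \<phi> g"
  shows "\<phi> \<one>\<^bsub>G\<^esub> = \<one>\<^bsub>C\<^esub>"
proof -
  have c: "\<phi> \<one>\<^bsub>G\<^esub> \<in> carrier C" using assms(2,3) monoid.one_closed by blast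
  have "\<phi> \<one>\<^bsub>G\<^esub> = \<phi> \<one>\<^bsub>G\<^esub> \<otimes>\<^bsub>C\<^esub> \<phi> \<one>\<^bsub>G\<^esub>"
    using assms(3,4,5) by (metis monoid.l_one monoid.one_closed)
  then show ?thesis using c assms(1)
    by (metis group.l_inv group.inv_closed monoid.m_assoc group.is_monoid monoid.l_one)
qed

lemma transfer_eval:
  assumes G: "group G" and C: "group C" and e: "range e \<subseteq> carrier G"
    and phi: "\<phi> \<in> carrier G \<rightarrow> carrier C"
    and D: "D = insert \<one>\<^bsub>G\<^esub> (eval_trm G e ` X)"
    and hom: "\<forall>h\<in>D. \<forall>g\<in>D. h \<otimes>\<^bsub>G\<^esub> g \<in> D \<longrightarrow> \<phi> (h \<otimes>\<^bsub>G\<^esub> g) = \<phi> h \<otimes>\<^bsub>C\<^esub> \<phi> g"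
  shows "subtrms t \<subseteq> X \<Longrightarrow> eval_trm C (\<phi> \<circ> e) t = \<phi> (eval_trm G e t)"
proof (induction t)
  case (Var i) then show ?case by simp
next
  case One
  have "\<phi> \<one>\<^bsub>G\<^esub> = \<one>\<^bsub>C\<^esub>"
    by (rule phi_one[OF C phi group.is_monoid[OF G] _ hom]) (simp add: D)
  then show ?case by simp
next
  case (Mul s t)
  have ss: "subtrms s \<subseteq> X" "subtrms t \<subseteq> X" using Mul.prems by auto
  have d1: "eval_trm G e s \<in> D" "eval_trm G e t \<in> D"
    using Mul.prems self_subtrms[of s] self_subtrms[of t] D by auto
  have d2: "eval_trm G e (Mul s t) \<in> D"
    unfolding D by (intro insertI2 imageI) (use Mul.prems in auto)
  show ?case using Mul.IH ss hom d1 d2 by simp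
next
  case (Inv t)
  have ss: "subtrms t \<subseteq> X" using Inv.prems by auto
  let ?a = "eval_trm G e t"
  have a: "?a \<in> carrier G" using eval_carrier[OF G e] .
  have inD1: "?a \<in> D" "\<one>\<^bsub>G\<^esub> \<in> D"
    using Inv.prems self_subtrms[of t] D by auto
  have inD2: "inv\<^bsub>G\<^esub> ?a \<in> D"
    unfolding D using imageI[of "Inv t" X "eval_trm G e"] Inv.prems by auto
  note inD = inD1 inD2
  have one: "\<phi> \<one>\<^bsub>G\<^esub> = \<one>\<^bsub>C\<^esub>"
    by (rule phi_one[OF C phi group.is_monoid[OF G] _ hom]) (simp add: D)
  have "?a \<otimes>\<^bsub>G\<^esub> inv\<^bsub>G\<^esub> ?a = \<one>\<^bsub>G\<^esub>" using a G by (simp add: group.r_inv)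
  then have "\<phi> ?a \<otimes>\<^bsub>C\<^esub> \<phi> (inv\<^bsub>G\<^esub> ?a) = \<one>\<^bsub>C\<^esub>" using hom inD one by metis
  moreover have "\<phi> ?a \<in> carrier C" "\<phi> (inv\<^bsub>G\<^esub> ?a) \<in> carrier C"
    using phi a G by (auto simp: group.inv_closed)
  ultimately have "inv\<^bsub>C\<^esub> (\<phi> ?a) = \<phi> (inv\<^bsub>G\<^esub> ?a)"
    using C by (metis group.inv_equality group.r_inv group.inv_closed group.l_inv group.is_monoid monoid.m_assoc monoid.l_one monoid.r_one)
  then show ?case using Inv.IH ss by simp
qed

lemma transfer_sat:
  assumes G: "group G" and C: "group C" and e: "range e \<subseteq> carrier G"
    and phi: "\<phi> \<in> carrier G \<rightarrow> carrier C"
    and D: "D = insert \<one>\<^bsub>G\<^esub> (eval_trm G e ` X)"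
    and hom: "\<forall>h\<in>D. \<forall>g\<in>D. h \<otimes>\<^bsub>G\<^esub> g \<in> D \<longrightarrow> \<phi> (h \<otimes>\<^bsub>G\<^esub> g) = \<phi> h \<otimes>\<^bsub>C\<^esub> \<phi> g"
    and inj: "inj_on \<phi> D"
    and cmp: "\<forall>g\<in>D. \<forall>q\<in>Q. \<forall>c. cmpr c (l g) (of_rat q) \<longleftrightarrow> cmpr c (lC (\<phi> g)) (of_rat q)"
  shows "qtrms p \<subseteq> X \<Longrightarrow> qrats p \<subseteq> Q \<Longrightarrow>
     sat_qf C (norm_pred lC) (\<phi> \<circ> e) p = sat_qf G (norm_pred l) e p"
proof (induction p)
  case (Eqt s t)
  have "subtrms s \<subseteq> X" "subtrms t \<subseteq> X" using Eqt by auto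
  moreover have "eval_trm G e s \<in> D" "eval_trm G e t \<in> D"
    using Eqt self_subtrms[of s] self_subtrms[of t] D by auto
  ultimately show ?case using transfer_eval[OF G C e phi D hom, unfolded comp_def] inj
    by (simp add: inj_on_eq_iff)
next
  case (Rel c q t)
  have "subtrms t \<subseteq> X" using Rel by auto
  moreover have "eval_trm G e t \<in> D" using Rel self_subtrms[of t] D by auto
  ultimately show ?case using transfer_eval[OF G C e phi D hom, unfolded comp_def] cmp Rel
    by (simp add: norm_pred_def)
qed auto



lemma model_of_norm:
  assumes C: "group C" and n: "inv_pseudo_norm Lam C lC" and Lam: "Lam \<subseteq> {0..}"
  shows "model_IPMG Lam C (norm_pred lC)"
proof -
  have v: "\<And>g. g \<in> carrier C \<Longrightarrow> lC g \<ge> 0" using n Lam unfolding inv_pseudo_norm_def by force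
  have i: "\<And>g. g \<in> carrier C \<Longrightarrow> lC (inv\<^bsub>C\<^esub> g) = lC g" using n unfolding inv_pseudo_norm_def by metis
  have t: "\<And>g h. g \<in> carrier C \<Longrightarrow> h \<in> carrier C \<Longrightarrow> lC (g \<otimes>\<^bsub>C\<^esub> h) \<le> lC g + lC h"
    using n unfolding inv_pseudo_norm_def by metis
  have cj: "\<And>g h. g \<in> carrier C \<Longrightarrow> h \<in> carrier C \<Longrightarrow> lC (h \<otimes>\<^bsub>C\<^esub> g \<otimes>\<^bsub>C\<^esub> inv\<^bsub>C\<^esub> h) = lC g"
  proof -
    fix g h assume g: "g \<in> carrier C" and h: "h \<in> carrier C"
    have "lC (inv\<^bsub>C\<^esub> (inv\<^bsub>C\<^esub> h) \<otimes>\<^bsub>C\<^esub> g \<otimes>\<^bsub>C\<^esub> inv\<^bsub>C\<^esub> h) = lC g"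
      using n g h C unfolding inv_pseudo_norm_def by (meson group.inv_closed)
    then show "lC (h \<otimes>\<^bsub>C\<^esub> g \<otimes>\<^bsub>C\<^esub> inv\<^bsub>C\<^esub> h) = lC g" using C h by (simp add: group.inv_inv)
  qed
  have o: "lC \<one>\<^bsub>C\<^esub> = 0" using n unfolding inv_pseudo_norm_def by metis
  show ?thesis unfolding model_IPMG_def le_pred_def ge_pred_def norm_pred_def
  proof (intro conjI ballI allI impI)
    fix g g' q q' assume g: "g \<in> carrier C" and g': "g' \<in> carrier C"
      and "of_rat q \<in> Lam" "of_rat q' \<in> Lam" "of_rat (q + q') \<in> Lam"
      and a: "cmpr Lt (lC g) (of_rat q) \<or> cmpr EqC (lC g) (of_rat q)"
      and b: "cmpr Lt (lC g') (of_rat q') \<or> cmpr EqC (lC g') (of_rat q')"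
    have "lC (g \<otimes>\<^bsub>C\<^esub> g') \<le> of_rat q + of_rat q'" using t[OF g g'] a b by auto
    then show "cmpr Lt (lC (g \<otimes>\<^bsub>C\<^esub> g')) (of_rat (q + q')) \<or> cmpr EqC (lC (g \<otimes>\<^bsub>C\<^esub> g')) (of_rat (q + q'))"
      by (auto simp: of_rat_add)
  next
    fix g h q c assume "g \<in> carrier C" "h \<in> carrier C"
    then show "cmpr c (lC (h \<otimes>\<^bsub>C\<^esub> g \<otimes>\<^bsub>C\<^esub> inv\<^bsub>C\<^esub> h)) (of_rat q) = cmpr c (lC g) (of_rat q)"
      using cj by simp
  next
    fix g q c assume "g \<in> carrier C"
    then show "cmpr c (lC g) (of_rat q) = cmpr c (lC (inv\<^bsub>C\<^esub> g)) (of_rat q)" using i by simp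
  next
    fix g and q q' :: rat assume "q \<le> q'"
    then have "(of_rat q :: real) \<le> of_rat q'" by (simp add: of_rat_less_eq)
    then show "cmpr Lt (lC g) (of_rat q) \<or> cmpr EqC (lC g) (of_rat q) \<Longrightarrow>
          cmpr Lt (lC g) (of_rat q') \<or> cmpr EqC (lC g) (of_rat q')"
      and "cmpr Gt (lC g) (of_rat q') \<or> cmpr EqC (lC g) (of_rat q') \<Longrightarrow>
          cmpr Gt (lC g) (of_rat q) \<or> cmpr EqC (lC g) (of_rat q)" by (simp_all only: cmpr.simps; linarith)+
  qed (use C o v in \<open>force+\<close>)
qed

lemma model_of_norm_IMG:
  assumes C: "group C" and n: "inv_pseudo_norm Lam C lC" and Lam: "Lam \<subseteq> {0..}"
    and nn: "is_norm_on C lC"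
  shows "model_IMG Lam C (norm_pred lC)"
  using model_of_norm[OF C n Lam] nn unfolding model_IMG_def is_norm_on_def le_pred_def norm_pred_def
  by (metis cmpr.simps(1,2) inv_pseudo_norm_def n Lam atLeast_iff linorder_not_le of_rat_0 subsetD)

definition modn :: "('a, 'b) monoid_scheme \<Rightarrow> ('a \<Rightarrow> real) \<Rightarrow> real \<Rightarrow> 'a \<Rightarrow> real" where
  "modn C lC \<epsilon> x = max (lC x) (if x = \<one>\<^bsub>C\<^esub> then 0 else \<epsilon>)"

lemma modn_norm:
  assumes C: "group C" and n: "inv_pseudo_norm Lam C lC" and eps: "\<epsilon> \<in> Lam" "\<epsilon> > 0"
  shows "inv_pseudo_norm Lam C (modn C lC \<epsilon>) \<and> is_norm_on C (modn C lC \<epsilon>)"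
proof -
  have v: "\<And>g. g \<in> carrier C \<Longrightarrow> lC g \<in> Lam" using n unfolding inv_pseudo_norm_def by metis
  have i: "\<And>g. g \<in> carrier C \<Longrightarrow> lC (inv\<^bsub>C\<^esub> g) = lC g" using n unfolding inv_pseudo_norm_def by metis
  have t: "\<And>g h. g \<in> carrier C \<Longrightarrow> h \<in> carrier C \<Longrightarrow> lC (g \<otimes>\<^bsub>C\<^esub> h) \<le> lC g + lC h"
    using n unfolding inv_pseudo_norm_def by metis
  have cj: "\<And>g h. g \<in> carrier C \<Longrightarrow> h \<in> carrier C \<Longrightarrow> lC (inv\<^bsub>C\<^esub> h \<otimes>\<^bsub>C\<^esub> g \<otimes>\<^bsub>C\<^esub> h) = lC g"
    using n unfolding inv_pseudo_norm_def by metis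
  have o: "lC \<one>\<^bsub>C\<^esub> = 0" using n unfolding inv_pseudo_norm_def by metis
  have nonneg: "\<And>g. g \<in> carrier C \<Longrightarrow> lC g \<ge> 0"
  proof -
    fix g assume g: "g \<in> carrier C"
    have "lC (g \<otimes>\<^bsub>C\<^esub> inv\<^bsub>C\<^esub> g) \<le> lC g + lC (inv\<^bsub>C\<^esub> g)" using t g C by (simp add: group.inv_closed)
    then show "lC g \<ge> 0" using C g o i by (simp add: group.r_inv)
  qed
  have invone: "\<And>g. g \<in> carrier C \<Longrightarrow> (inv\<^bsub>C\<^esub> g = \<one>\<^bsub>C\<^esub>) = (g = \<one>\<^bsub>C\<^esub>)"
    using C by (metis group.inv_eq_1_iff)
  have cjone: "\<And>g h. g \<in> carrier C \<Longrightarrow> h \<in> carrier C \<Longrightarrow> (inv\<^bsub>C\<^esub> h \<otimes>\<^bsub>C\<^esub> g \<otimes>\<^bsub>C\<^esub> h = \<one>\<^bsub>C\<^esub>) = (g = \<one>\<^bsub>C\<^esub>)"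
  proof -
    fix g h assume g: "g \<in> carrier C" and h: "h \<in> carrier C"
    interpret group C by fact
    show "(inv\<^bsub>C\<^esub> h \<otimes>\<^bsub>C\<^esub> g \<otimes>\<^bsub>C\<^esub> h = \<one>\<^bsub>C\<^esub>) = (g = \<one>\<^bsub>C\<^esub>)"
    proof
      assume "inv\<^bsub>C\<^esub> h \<otimes>\<^bsub>C\<^esub> g \<otimes>\<^bsub>C\<^esub> h = \<one>\<^bsub>C\<^esub>"
      then have "h \<otimes>\<^bsub>C\<^esub> (inv\<^bsub>C\<^esub> h \<otimes>\<^bsub>C\<^esub> g \<otimes>\<^bsub>C\<^esub> h) \<otimes>\<^bsub>C\<^esub> inv\<^bsub>C\<^esub> h = h \<otimes>\<^bsub>C\<^esub> inv\<^bsub>C\<^esub> h" using h by simp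
      moreover have "h \<otimes>\<^bsub>C\<^esub> (inv\<^bsub>C\<^esub> h \<otimes>\<^bsub>C\<^esub> g \<otimes>\<^bsub>C\<^esub> h) \<otimes>\<^bsub>C\<^esub> inv\<^bsub>C\<^esub> h = g"
        using g h by (simp add: m_assoc[symmetric] r_inv) (simp add: m_assoc)
      ultimately show "g = \<one>\<^bsub>C\<^esub>" using h by simp
    qed (use h in simp)
  qed
  have prodone: "\<And>g h. g \<in> carrier C \<Longrightarrow> h \<in> carrier C \<Longrightarrow> g \<otimes>\<^bsub>C\<^esub> h \<noteq> \<one>\<^bsub>C\<^esub> \<Longrightarrow> g \<noteq> \<one>\<^bsub>C\<^esub> \<or> h \<noteq> \<one>\<^bsub>C\<^esub>"
    using C by (metis group.is_monoid monoid.l_one)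
  show ?thesis unfolding inv_pseudo_norm_def is_norm_on_def modn_def
  proof (intro conjI ballI impI)
    fix g assume "g \<in> carrier C" then show "max (lC g) (if g = \<one>\<^bsub>C\<^esub> then 0 else \<epsilon>) \<in> Lam"
      using v eps o v[of "\<one>\<^bsub>C\<^esub>"] C by (auto simp: max_def group.is_monoid monoid.one_closed)
  next
    fix g assume "g \<in> carrier C" "max (lC g) (if g = \<one>\<^bsub>C\<^esub> then 0 else \<epsilon>) = 0"
    then show "g = \<one>\<^bsub>C\<^esub>" using eps by (auto split: if_splits)
  next
    fix g h assume g: "g \<in> carrier C" and h: "h \<in> carrier C"
    show "max (lC (g \<otimes>\<^bsub>C\<^esub> h)) (if g \<otimes>\<^bsub>C\<^esub> h = \<one>\<^bsub>C\<^esub> then 0 else \<epsilon>)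
         \<le> max (lC g) (if g = \<one>\<^bsub>C\<^esub> then 0 else \<epsilon>) + max (lC h) (if h = \<one>\<^bsub>C\<^esub> then 0 else \<epsilon>)"
      using t[OF g h] nonneg[OF g] nonneg[OF h] prodone[OF g h] eps by (auto simp: max_def)
  qed (use o i invone cjone cj C in \<open>auto simp: group.inv_closed\<close>)
qed



definition triv :: "nat monoid" where
  "triv = \<lparr>carrier = {0}, mult = (\<lambda>x y. 0), one = 0\<rparr>"

lemma triv_group: "group triv"
  by (rule groupI) (auto simp: triv_def)

lemma triv_norm: "0 \<in> Lam \<Longrightarrow> inv_pseudo_norm Lam triv (\<lambda>_. 0) \<and> is_norm_on triv (\<lambda>_. 0)"
  by (simp add: inv_pseudo_norm_def is_norm_on_def triv_def)

lemma ex_holds_transfer: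
  assumes G: "group G" and C: "group C" and e: "range e \<subseteq> carrier G"
    and sat: "sat_qf G (norm_pred l) e p"
    and phi: "\<phi> \<in> carrier G \<rightarrow> carrier C"
    and D: "D = insert \<one>\<^bsub>G\<^esub> (eval_trm G e ` qtrms p)"
    and hom: "\<forall>h\<in>D. \<forall>g\<in>D. h \<otimes>\<^bsub>G\<^esub> g \<in> D \<longrightarrow> \<phi> (h \<otimes>\<^bsub>G\<^esub> g) = \<phi> h \<otimes>\<^bsub>C\<^esub> \<phi> g"
    and inj: "inj_on \<phi> D"
    and cmp: "\<forall>g\<in>D. \<forall>q\<in>Q. \<forall>c. cmpr c (l g) (of_rat q) \<longleftrightarrow> cmpr c (lC (\<phi> g)) (of_rat q)"
    and Q: "qrats p \<subseteq> Q"
  shows "ex_holds C (norm_pred lC) p"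
  unfolding ex_holds_def
proof (intro exI conjI)
  show "range (\<phi> \<circ> e) \<subseteq> carrier C" using e phi by auto
  show "sat_qf C (norm_pred lC) (\<phi> \<circ> e) p"
    using transfer_sat[OF G C e phi D hom inj cmp, of p] Q sat by simp
qed

lemma D_props:
  assumes G: "group G" and e: "range e \<subseteq> carrier G"
  shows "insert \<one>\<^bsub>G\<^esub> (eval_trm G e ` qtrms p) \<subseteq> carrier G"
    "finite (insert \<one>\<^bsub>G\<^esub> (eval_trm G e ` qtrms p))"
  using eval_carrier[OF G e] finite_qtrms G by (auto simp: group.is_monoid monoid.one_closed)

lemma lef_get:
  assumes "metrically_LEF Lam G l"
  shows "D \<subseteq> carrier G \<Longrightarrow> finite D \<Longrightarrow> finite Q \<Longrightarrow> \<forall>q\<in>Q. of_rat q \<in> Lam \<Longrightarrow> 0 \<in> Q \<Longrightarrow>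
      (\<exists>(C :: nat monoid) lC \<phi>. group C \<and> finite (carrier C) \<and> inv_pseudo_norm Lam C lC \<and>
         \<phi> \<in> carrier G \<rightarrow> carrier C \<and> inj_on \<phi> D \<and>
         (\<forall>h\<in>D. \<forall>g\<in>D. h \<otimes>\<^bsub>G\<^esub> g \<in> D \<longrightarrow> \<phi> (h \<otimes>\<^bsub>G\<^esub> g) = \<phi> h \<otimes>\<^bsub>C\<^esub> \<phi> g) \<and>
         (\<forall>g\<in>D. \<forall>q\<in>Q. \<forall>c. cmpr c (l g) (of_rat q) \<longleftrightarrow> cmpr c (lC (\<phi> g)) (of_rat q)))"
  using assms unfolding metrically_LEF_def by blast

lemma lef_fmp:
  assumes G: "group G" and n: "inv_pseudo_norm Lam G l" and Lam: "Lam \<subseteq> {0..}"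
    and lef: "metrically_LEF Lam G l"
  shows "fmp_exist Lam (model_IPMG Lam) G (norm_pred l)"
  unfolding fmp_exist_def
proof (intro allI impI)
  fix p assume wf: "wf_qf Lam p" and ex: "ex_holds G (norm_pred l) p"
  then obtain e where e: "range e \<subseteq> carrier G" and sat: "sat_qf G (norm_pred l) e p"
    unfolding ex_holds_def by blast
  define D where "D = insert \<one>\<^bsub>G\<^esub> (eval_trm G e ` qtrms p)"
  define Q where "Q = insert 0 (qrats p)"
  have z: "0 \<in> Lam" using n G unfolding inv_pseudo_norm_def by (metis group.is_monoid monoid.one_closed)
  have Dc: "D \<subseteq> carrier G" "finite D" using D_props[OF G e] D_def by auto
  have Qc: "finite Q" "\<forall>q\<in>Q. of_rat q \<in> Lam" "0 \<in> Q"
    using finite_qrats wf_qrats[OF wf] z by (auto simp: Q_def)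
  obtain C :: "nat monoid" and lC \<phi> where C: "group C" "finite (carrier C)" "inv_pseudo_norm Lam C lC"
    and phi: "\<phi> \<in> carrier G \<rightarrow> carrier C" "inj_on \<phi> D"
    and hom: "\<forall>h\<in>D. \<forall>g\<in>D. h \<otimes>\<^bsub>G\<^esub> g \<in> D \<longrightarrow> \<phi> (h \<otimes>\<^bsub>G\<^esub> g) = \<phi> h \<otimes>\<^bsub>C\<^esub> \<phi> g"
    and cmp: "\<forall>g\<in>D. \<forall>q\<in>Q. \<forall>c. cmpr c (l g) (of_rat q) \<longleftrightarrow> cmpr c (lC (\<phi> g)) (of_rat q)"
    using lef_get[OF lef Dc Qc] by blast
  show "\<exists>(M :: nat monoid) PM. finite (carrier M) \<and> model_IPMG Lam M PM \<and> ex_holds M PM p"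
  proof (intro exI conjI)
    show "finite (carrier C)" by fact
    show "model_IPMG Lam C (norm_pred lC)" using model_of_norm[OF C(1,3) Lam] .
    show "ex_holds C (norm_pred lC) p"
      by (rule ex_holds_transfer[OF G C(1) e sat phi(1) D_def hom phi(2) cmp]) (auto simp: Q_def)
  qed
qed

lemma lef_fmp_IMG:
  assumes G: "group G" and n: "inv_pseudo_norm Lam G l" and Lam: "Lam \<subseteq> {0..}"
    and nn: "is_norm_on G l"
    and lef: "metrically_LEF Lam G l"
  shows "fmp_exist Lam (model_IMG Lam) G (norm_pred l)"
  unfolding fmp_exist_def
proof (intro allI impI)
  fix p assume wf: "wf_qf Lam p" and ex: "ex_holds G (norm_pred l) p"
  then obtain e where e: "range e \<subseteq> carrier G" and sat: "sat_qf G (norm_pred l) e p"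
    unfolding ex_holds_def by blast
  define D where "D = insert \<one>\<^bsub>G\<^esub> (eval_trm G e ` qtrms p)"
  define Q where "Q = insert 0 (qrats p)"
  have one: "\<one>\<^bsub>G\<^esub> \<in> carrier G" using G by (simp add: group.is_monoid monoid.one_closed)
  have z: "0 \<in> Lam" and l1: "l \<one>\<^bsub>G\<^esub> = 0" using n one unfolding inv_pseudo_norm_def by metis+
  have lpos: "\<And>g. g \<in> carrier G \<Longrightarrow> g \<noteq> \<one>\<^bsub>G\<^esub> \<Longrightarrow> l g > 0"
    using n nn Lam unfolding inv_pseudo_norm_def is_norm_on_def by force
  have Dc: "D \<subseteq> carrier G" "finite D" using D_props[OF G e] D_def by auto
  have Qc: "finite Q" "\<forall>q\<in>Q. of_rat q \<in> Lam" "0 \<in> Q"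
    using finite_qrats wf_qrats[OF wf] z by (auto simp: Q_def)
  obtain C :: "nat monoid" and lC \<phi> where C: "group C" "finite (carrier C)" "inv_pseudo_norm Lam C lC"
    and phi: "\<phi> \<in> carrier G \<rightarrow> carrier C" "inj_on \<phi> D"
    and hom: "\<forall>h\<in>D. \<forall>g\<in>D. h \<otimes>\<^bsub>G\<^esub> g \<in> D \<longrightarrow> \<phi> (h \<otimes>\<^bsub>G\<^esub> g) = \<phi> h \<otimes>\<^bsub>C\<^esub> \<phi> g"
    and cmp: "\<forall>g\<in>D. \<forall>q\<in>Q. \<forall>c. cmpr c (l g) (of_rat q) \<longleftrightarrow> cmpr c (lC (\<phi> g)) (of_rat q)"
    using lef_get[OF lef Dc Qc] by blast
  show "\<exists>(M :: nat monoid) PM. finite (carrier M) \<and> model_IMG Lam M PM \<and> ex_holds M PM p"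
  proof (cases "\<exists>x\<in>Lam. x > 0")
    case True
    then obtain x0 where x0: "x0 \<in> Lam" "x0 > 0" by blast
    define V where "V = {lC (\<phi> g) | g. g \<in> D \<and> lC (\<phi> g) > 0}"
    have fV: "finite V" using Dc(2) unfolding V_def by simp
    define \<epsilon> where "\<epsilon> = (if V = {} then x0 else Min V)"
    have Vl: "V \<subseteq> Lam" using C(3) phi(1) Dc(1) unfolding V_def inv_pseudo_norm_def by blast
    have eps: "\<epsilon> \<in> Lam" "\<epsilon> > 0"
    proof -
      show "\<epsilon> \<in> Lam" using x0 Vl fV Min_in unfolding \<epsilon>_def by auto
      show "\<epsilon> > 0" using x0 fV Min_in[OF fV] unfolding \<epsilon>_def V_def by auto
    qed
    have phi1: "\<phi> \<one>\<^bsub>G\<^esub> = \<one>\<^bsub>C\<^esub>"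
      by (rule phi_one[OF C(1) phi(1) group.is_monoid[OF G] _ hom]) (simp add: D_def)
    have lC1: "lC \<one>\<^bsub>C\<^esub> = 0" using C(3) unfolding inv_pseudo_norm_def by metis
    have same: "\<And>g. g \<in> D \<Longrightarrow> modn C lC \<epsilon> (\<phi> g) = lC (\<phi> g)"
    proof -
      fix g assume gD: "g \<in> D"
      show "modn C lC \<epsilon> (\<phi> g) = lC (\<phi> g)"
      proof (cases "g = \<one>\<^bsub>G\<^esub>")
        case True then show ?thesis using phi1 lC1 by (simp add: modn_def)
      next
        case False
        then have "l g > 0" using lpos Dc(1) gD by auto
        then have "cmpr Gt (l g) (of_rat 0)" by simp
        then have "cmpr Gt (lC (\<phi> g)) (of_rat 0)" using cmp gD Qc(3) by blast
        then have "lC (\<phi> g) > 0" by simp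
        then have "lC (\<phi> g) \<in> V" using gD unfolding V_def by blast
        then have "\<epsilon> \<le> lC (\<phi> g)" using fV unfolding \<epsilon>_def by auto
        then show ?thesis using lC1 by (simp add: modn_def max_def)
      qed
    qed
    show ?thesis
    proof (intro exI conjI)
      show "finite (carrier C)" by fact
      show "model_IMG Lam C (norm_pred (modn C lC \<epsilon>))"
        using modn_norm[OF C(1,3) eps] model_of_norm_IMG[OF C(1) _ Lam] by blast
      show "ex_holds C (norm_pred (modn C lC \<epsilon>)) p"
        by (rule ex_holds_transfer[OF G C(1) e sat phi(1) D_def hom phi(2), of Q]) (use cmp same in \<open>auto simp: Q_def\<close>)
    qed
  next
    case False
    then have L0: "\<And>x. x \<in> Lam \<Longrightarrow> x = 0" using Lam by force
    have D1: "D \<subseteq> {\<one>\<^bsub>G\<^esub>}"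
    proof
      fix g assume "g \<in> D"
      then have "g \<in> carrier G" using Dc by auto
      moreover then have "l g = 0" using L0 n unfolding inv_pseudo_norm_def by blast
      ultimately show "g \<in> {\<one>\<^bsub>G\<^esub>}" using lpos by force
    qed
    show ?thesis
    proof (intro exI conjI)
      show "finite (carrier triv)" by (simp add: triv_def)
      show "model_IMG Lam triv (norm_pred (\<lambda>_. 0))"
        using triv_norm[OF z] model_of_norm_IMG[OF triv_group _ Lam] by blast
      show "ex_holds triv (norm_pred (\<lambda>_. 0)) p"
      proof (rule ex_holds_transfer[OF G triv_group e sat _ D_def, of "\<lambda>_. 0" Q])
        show "(\<lambda>_. 0) \<in> carrier G \<rightarrow> carrier triv" by (simp add: triv_def)
        show "\<forall>h\<in>D. \<forall>g\<in>D. h \<otimes>\<^bsub>G\<^esub> g \<in> D \<longrightarrow> 0 = 0 \<otimes>\<^bsub>triv\<^esub> 0" by (simp add: triv_def)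
        show "inj_on (\<lambda>_. 0) D" using D1 by (simp add: inj_on_def) blast
        show "\<forall>g\<in>D. \<forall>q\<in>Q. \<forall>c. cmpr c (l g) (of_rat q) \<longleftrightarrow> cmpr c 0 (of_rat q)"
          using D1 l1 by auto
      qed (auto simp: Q_def)
    qed
  qed
qed



lemma mI_parts:
  assumes "model_IPMG Lam M P"
  shows "group M"
   and "\<forall>a\<in>carrier M. \<forall>q. of_rat q \<in> Lam \<longrightarrow>
        ((P Lt q a \<and> \<not> P EqC q a \<and> \<not> P Gt q a) \<or>
         (\<not> P Lt q a \<and> P EqC q a \<and> \<not> P Gt q a) \<or>
         (\<not> P Lt q a \<and> \<not> P EqC q a \<and> P Gt q a))"
   and "P EqC 0 \<one>\<^bsub>M\<^esub>"
   and "\<forall>g\<in>carrier M. \<forall>q c. of_rat q \<in> Lam \<longrightarrow> (P c q g \<longleftrightarrow> P c q (inv\<^bsub>M\<^esub> g))"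
   and "\<forall>g\<in>carrier M. \<forall>g'\<in>carrier M. \<forall>q q'. of_rat q \<in> Lam \<longrightarrow> of_rat q' \<in> Lam \<longrightarrow>
        of_rat (q + q') \<in> Lam \<longrightarrow> le_pred P q g \<longrightarrow> le_pred P q' g' \<longrightarrow>
        le_pred P (q + q') (g \<otimes>\<^bsub>M\<^esub> g')"
   and "\<forall>g\<in>carrier M. \<forall>h\<in>carrier M. \<forall>q c. of_rat q \<in> Lam \<longrightarrow>
        (P c q (h \<otimes>\<^bsub>M\<^esub> g \<otimes>\<^bsub>M\<^esub> inv\<^bsub>M\<^esub> h) \<longleftrightarrow> P c q g)"
  by (insert assms[unfolded model_IPMG_def], elim conjE, assumption)+

lemma mI_group: "model_IPMG Lam M P \<Longrightarrow> group M"
  using mI_parts(1) .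
lemma mI_tri: "model_IPMG Lam M P \<Longrightarrow> a \<in> carrier M \<Longrightarrow> of_rat q \<in> Lam \<Longrightarrow> P Gt q a \<Longrightarrow> \<not> le_pred P q a"
  unfolding le_pred_def using mI_parts(2) by metis
lemma mI_one: "model_IPMG Lam M P \<Longrightarrow> P EqC 0 \<one>\<^bsub>M\<^esub>"
  using mI_parts(3) .
lemma mI_inv: "model_IPMG Lam M P \<Longrightarrow> g \<in> carrier M \<Longrightarrow> of_rat q \<in> Lam \<Longrightarrow> P c q g = P c q (inv\<^bsub>M\<^esub> g)"
  using mI_parts(4) by metis
lemma mI_add: "model_IPMG Lam M P \<Longrightarrow> g \<in> carrier M \<Longrightarrow> g' \<in> carrier M \<Longrightarrow> of_rat q \<in> Lam \<Longrightarrow> of_rat q' \<in> Lam \<Longrightarrow>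
        of_rat (q + q') \<in> Lam \<Longrightarrow> le_pred P q g \<Longrightarrow> le_pred P q' g' \<Longrightarrow>
        le_pred P (q + q') (g \<otimes>\<^bsub>M\<^esub> g')"
  using mI_parts(5) by metis
lemma mI_conj: "model_IPMG Lam M P \<Longrightarrow> g \<in> carrier M \<Longrightarrow> h \<in> carrier M \<Longrightarrow> of_rat q \<in> Lam \<Longrightarrow>
        P c q (h \<otimes>\<^bsub>M\<^esub> g \<otimes>\<^bsub>M\<^esub> inv\<^bsub>M\<^esub> h) = P c q g"
  using mI_parts(6) by metis

definition lCdef :: "(cmp \<Rightarrow> rat \<Rightarrow> 'a \<Rightarrow> bool) \<Rightarrow> rat set \<Rightarrow> real \<Rightarrow> 'a \<Rightarrow> real" where
  "lCdef P T K a = (if \<exists>t\<in>T. le_pred P t a then of_rat (Min {t\<in>T. le_pred P t a}) else K)"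

lemma lCdef_bounds:
  assumes fT: "finite T" and T0: "\<forall>t\<in>T. t \<ge> 0" and KT: "\<forall>t\<in>T. of_rat t \<le> K" and Kn: "0 \<le> K"
  shows "0 \<le> lCdef P T K a" "lCdef P T K a \<le> K"
proof -
  show "0 \<le> lCdef P T K a"
  proof (cases "\<exists>t\<in>T. le_pred P t a")
    case True
    then have "Min {t\<in>T. le_pred P t a} \<in> T" using fT Min_in[of "{t\<in>T. le_pred P t a}"] by auto
    then show ?thesis using True T0 unfolding lCdef_def by simp
  next
    case False then show ?thesis unfolding lCdef_def using Kn by simp
  qed
  show "lCdef P T K a \<le> K"
  proof (cases "\<exists>t\<in>T. le_pred P t a")
    case True
    then have "Min {t\<in>T. le_pred P t a} \<in> T" using fT Min_in[of "{t\<in>T. le_pred P t a}"] by auto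
    then show ?thesis using True KT unfolding lCdef_def by simp
  qed (simp add: lCdef_def)
qed

lemma lCdef_Lam:
  assumes fT: "finite T" and TL: "\<forall>t\<in>T. of_rat t \<in> Lam" and K: "K \<in> Lam"
  shows "lCdef P T K a \<in> Lam"
proof (cases "\<exists>t\<in>T. le_pred P t a")
  case True
  then have "Min {t\<in>T. le_pred P t a} \<in> T" using fT Min_in[of "{t\<in>T. le_pred P t a}"] by auto
  then show ?thesis using True TL unfolding lCdef_def by simp
qed (simp add: lCdef_def K)

lemma lCdef_cong: "(\<forall>t\<in>T. le_pred P t a = le_pred P t b) \<Longrightarrow> lCdef P T K a = lCdef P T K b"
  unfolding lCdef_def by (metis (mono_tags, lifting) Collect_cong)

lemma lCdef_le:
  assumes fT: "finite T" and "t \<in> T" "le_pred P t a"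
  shows "lCdef P T K a \<le> of_rat t"
proof -
  have "Min {t\<in>T. le_pred P t a} \<le> t" using assms by (intro Min_le) auto
  then show ?thesis using assms unfolding lCdef_def by (auto simp: of_rat_less_eq)
qed

lemma model_norm:
  assumes m: "model_IPMG Lam M P" and fT: "finite T" and TL: "\<forall>t\<in>T. of_rat t \<in> Lam"
    and T0: "\<forall>t\<in>T. t \<ge> 0" and z: "0 \<in> T" and K: "K \<in> Lam" and KT: "\<forall>t\<in>T. of_rat t \<le> K"
    and add: "\<forall>t\<in>T. \<forall>t'\<in>T. t + t' \<notin> T \<longrightarrow> K \<le> of_rat (t + t')"
  shows "inv_pseudo_norm Lam M (lCdef P T K)"
proof -
  have G: "group M" using mI_group[OF m] .
  have Kn: "0 \<le> K" using KT z by force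
  note bnd = lCdef_bounds[OF fT T0 KT Kn]
  have one: "lCdef P T K \<one>\<^bsub>M\<^esub> = 0"
  proof -
    have "le_pred P 0 \<one>\<^bsub>M\<^esub>" using mI_one[OF m] by (simp add: le_pred_def)
    then have "lCdef P T K \<one>\<^bsub>M\<^esub> \<le> 0" using lCdef_le[OF fT z] by fastforce
    then show ?thesis using bnd(1)[of P "\<one>\<^bsub>M\<^esub>"] by linarith
  qed
  have inv: "lCdef P T K g = lCdef P T K (inv\<^bsub>M\<^esub> g)" if g: "g \<in> carrier M" for g
    by (rule lCdef_cong) (use mI_inv[OF m g] TL in \<open>auto simp: le_pred_def\<close>)
  have conj: "lCdef P T K (inv\<^bsub>M\<^esub> h \<otimes>\<^bsub>M\<^esub> g \<otimes>\<^bsub>M\<^esub> h) = lCdef P T K g"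
    if g: "g \<in> carrier M" and h: "h \<in> carrier M" for g h
  proof (rule lCdef_cong, intro ballI)
    fix t assume t: "t \<in> T"
    have hi: "inv\<^bsub>M\<^esub> h \<in> carrier M" using G h by (simp add: group.inv_closed)
    have "inv\<^bsub>M\<^esub> (inv\<^bsub>M\<^esub> h) = h" using G h by (simp add: group.inv_inv)
    then show "le_pred P t (inv\<^bsub>M\<^esub> h \<otimes>\<^bsub>M\<^esub> g \<otimes>\<^bsub>M\<^esub> h) = le_pred P t g"
      using mI_conj[OF m g hi, of t] t TL unfolding le_pred_def by metis
  qed
  have tri: "lCdef P T K (g \<otimes>\<^bsub>M\<^esub> h) \<le> lCdef P T K g + lCdef P T K h"
    if g: "g \<in> carrier M" and h: "h \<in> carrier M" for g h
  proof (cases "(\<exists>t\<in>T. le_pred P t g) \<and> (\<exists>t\<in>T. le_pred P t h)")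
    case True
    define r where "r = Min {t\<in>T. le_pred P t g}"
    define r' where "r' = Min {t\<in>T. le_pred P t h}"
    have r: "r \<in> T" "le_pred P r g" using True fT Min_in[of "{t\<in>T. le_pred P t g}"] unfolding r_def by auto
    have r': "r' \<in> T" "le_pred P r' h" using True fT Min_in[of "{t\<in>T. le_pred P t h}"] unfolding r'_def by auto
    have eq: "lCdef P T K g + lCdef P T K h = of_rat (r + r')"
      using True unfolding lCdef_def r_def r'_def by (simp add: of_rat_add)
    show ?thesis
    proof (cases "r + r' \<in> T")
      case True
      have "le_pred P (r + r') (g \<otimes>\<^bsub>M\<^esub> h)"
        using mI_add[OF m g h] r r' True TL by blast
      then show ?thesis using lCdef_le[OF fT True] eq by simp
    next
      case False
      then show ?thesis using add r r' eq bnd(2)[of P "g \<otimes>\<^bsub>M\<^esub> h"] by force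
    qed
  next
    case False
    then have "lCdef P T K g = K \<or> lCdef P T K h = K" unfolding lCdef_def by auto
    then show ?thesis using bnd[of P g] bnd[of P h] bnd[of P "g \<otimes>\<^bsub>M\<^esub> h"] by linarith
  qed
  show ?thesis unfolding inv_pseudo_norm_def
    by (intro conjI ballI lCdef_Lam[OF fT TL K] one inv conj tri)
qed



lemma common_denom:
  assumes "finite (Q :: rat set)"
  shows "\<exists>N::nat. N > 0 \<and> (\<forall>q\<in>Q. \<exists>k::int. q * of_nat N = of_int k)"
  using assms
proof (induction Q rule: finite_induct)
  case empty then show ?case by (intro exI[of _ 1]) simp
next
  case (insert q F)
  then obtain N where N: "N > 0" "\<forall>q\<in>F. \<exists>k::int. q * of_nat N = of_int k" by blast
  obtain a d where ad: "quotient_of q = (a, d)" by (cases "quotient_of q") auto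
  have d: "d > 0" using quotient_of_denom_pos[OF ad] .
  have qd: "q = of_int a / of_int d" using quotient_of_div[OF ad] .
  define N' where "N' = N * nat d"
  have "N' > 0" using N d unfolding N'_def by simp
  moreover have "\<forall>q'\<in>insert q F. \<exists>k::int. q' * of_nat N' = of_int k"
  proof
    fix q' assume "q' \<in> insert q F"
    then show "\<exists>k::int. q' * of_nat N' = of_int k"
    proof
      assume "q' = q"
      then have "q' * of_nat N' = of_int (a * int N)"
        using d unfolding qd N'_def by (simp add: field_simps)
      then show ?thesis by blast
    next
      assume "q' \<in> F"
      then obtain k where "q' * of_nat N = of_int k" using N by blast
      then have "q' * of_nat N' = of_int (k * d)"
        using d unfolding N'_def by (simp add: field_simps)
      then show ?thesis by blast
    qed
  qed
  ultimately show ?case by blast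
qed

lemma small_inv:
  assumes "finite (S :: real set)" "\<forall>x\<in>S. x > 0"
  shows "\<exists>m::nat. m > 0 \<and> (\<forall>x\<in>S. 1 / real m \<le> x)"
  using assms
proof (induction S rule: finite_induct)
  case empty then show ?case by (intro exI[of _ 1]) simp
next
  case (insert x F)
  then obtain m where m: "m > 0" "\<forall>x\<in>F. 1 / real m \<le> x" by auto
  obtain k where k: "inverse (of_nat (Suc k)) < x" using reals_Archimedean insert.prems by auto
  define m' where "m' = m * Suc k"
  have a: "1 / real m' \<le> 1 / real m" using m unfolding m'_def by (simp add: frac_le)
  have "1 * Suc k \<le> m * Suc k" using m by (intro mult_le_mono1) simp
  then have "Suc k \<le> m'" unfolding m'_def by simp
  then have "real (Suc k) \<le> real m'" by linarith
  moreover have "m' > 0" using m unfolding m'_def by simp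
  ultimately have b: "1 / real m' \<le> 1 / real (Suc k)" by (intro divide_left_mono) auto
  show ?case
  proof (intro exI conjI ballI)
    show "m' > 0" using m unfolding m'_def by simp
    fix y assume "y \<in> insert x F"
    then show "1 / real m' \<le> y" using a b m k by (auto simp: inverse_eq_divide)
  qed
qed

lemma Lam_interval:
  assumes cv: "convex Lam" and z: "0 \<in> Lam" and x: "x \<in> Lam" and y: "0 \<le> y" "y \<le> (x::real)"
  shows "y \<in> Lam"
proof (cases "x = 0")
  case True then show ?thesis using y z by simp
next
  case False
  then have xp: "x > 0" using y by simp
  have "(1 - y / x) *\<^sub>R 0 + (y / x) *\<^sub>R x \<in> Lam"
    by (rule convexD[OF cv z x]) (use xp y in \<open>auto simp: field_simps\<close>)
  then show ?thesis using xp by simp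
qed

lemma K_exists:
  assumes cl: "closed Lam" and cv: "convex Lam" and z: "0 \<in> Lam" and Mx: "0 \<le> (Mx::real)"
  obtains K where "K \<in> Lam" "0 \<le> K" "K \<le> Mx" "\<And>y. 0 \<le> y \<Longrightarrow> y \<le> K \<Longrightarrow> y \<in> Lam"
    "K = Mx \<or> (\<forall>x\<in>Lam. x \<le> K)"
proof (cases "\<exists>x\<in>Lam. x \<ge> Mx")
  case True
  then obtain x where x: "x \<in> Lam" "x \<ge> Mx" by blast
  have M: "Mx \<in> Lam" using Lam_interval[OF cv z x(1) Mx x(2)] .
  show ?thesis
  proof (rule that[of Mx])
    show "\<And>y. 0 \<le> y \<Longrightarrow> y \<le> Mx \<Longrightarrow> y \<in> Lam" using Lam_interval[OF cv z M] by blast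
  qed (use M Mx in simp_all)
next
  case False
  then have lt: "\<forall>x\<in>Lam. x < Mx" by auto
  have ne: "Lam \<noteq> {}" using z by blast
  have bdd: "bdd_above Lam" using lt by (meson bdd_above.I less_imp_le)
  have S: "Sup Lam \<in> Lam" using closed_contains_Sup[OF ne bdd cl] .
  have up: "\<forall>x\<in>Lam. x \<le> Sup Lam" using bdd by (simp add: cSup_upper)
  have le: "Sup Lam \<le> Mx" using ne lt by (meson cSup_least less_imp_le)
  show ?thesis
  proof (rule that[of "Sup Lam"])
    show "\<And>y. 0 \<le> y \<Longrightarrow> y \<le> Sup Lam \<Longrightarrow> y \<in> Lam" using Lam_interval[OF cv z S] by blast
    show "0 \<le> Sup Lam" using up z by blast
  qed (use S up le in simp_all)
qed

definition conjs :: "qf list \<Rightarrow> qf" where "conjs xs = foldr Conj xs TT"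

lemma sat_conjs: "sat_qf G P e (conjs xs) = (\<forall>a\<in>set xs. sat_qf G P e a)"
  unfolding conjs_def by (induction xs) auto

lemma wf_conjs: "wf_qf Lam (conjs xs) = (\<forall>a\<in>set xs. wf_qf Lam a)"
  unfolding conjs_def by (induction xs) auto

lemma UNIV_cmp: "(UNIV :: cmp set) = {Lt, EqC, Gt}"
  by (auto intro: cmp.exhaust)



lemma fmp_lef:
  assumes cl: "closed Lam" and cv: "convex Lam" and pos: "Lam \<subseteq> {0..}" and z: "0 \<in> Lam"
    and G: "group G" and n: "inv_pseudo_norm Lam G l"
    and fmp: "fmp_exist Lam (model_IPMG Lam) G (norm_pred l)"
  shows "metrically_LEF Lam G l"
  unfolding metrically_LEF_def
proof (intro allI impI)
  fix D Q assume Dc: "D \<subseteq> carrier G" and fD: "finite D" and fQ: "finite Q"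
    and QL: "\<forall>q\<in>Q. of_rat q \<in> Lam" and Q0: "0 \<in> Q"
  have lL: "\<And>g. g \<in> carrier G \<Longrightarrow> l g \<in> Lam" using n unfolding inv_pseudo_norm_def by blast
  have lpos: "\<And>g. g \<in> carrier G \<Longrightarrow> l g \<ge> 0" using lL pos by force
  have Qpos: "\<And>q. q \<in> Q \<Longrightarrow> q \<ge> 0"
  proof -
    fix q assume "q \<in> Q"
    then have "(0::real) \<le> of_rat q" using QL pos by force
    then show "q \<ge> 0" by (simp add: zero_le_of_rat_iff)
  qed
  obtain N1 where N1: "N1 > 0" "\<forall>q\<in>Q. \<exists>k::int. q * of_nat N1 = of_int k"
    using common_denom[OF fQ] by blast
  define S where "S = (\<lambda>(g,q). of_rat q - l g) ` {(g,q). g \<in> D \<and> q \<in> Q \<and> l g < of_rat q}"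
  have fS: "finite S" unfolding S_def
    by (rule finite_imageI, rule finite_subset[of _ "D \<times> Q"]) (use fD fQ in auto)
  have Spos: "\<forall>x\<in>S. x > 0" unfolding S_def by auto
  obtain m where m: "m > 0" "\<forall>x\<in>S. 1 / real m \<le> x" using small_inv[OF fS Spos] by blast
  define N where "N = N1 * m"
  have Npos: "N > 0" using N1 m by (simp add: N_def)
  have gridQ: "\<forall>q\<in>Q. \<exists>k::int. q * of_nat N = of_int k"
  proof
    fix q assume "q \<in> Q" then obtain k where k: "q * of_nat N1 = of_int k" using N1 by blast
    have "q * of_nat N = (q * of_nat N1) * of_nat m" by (simp add: N_def mult.assoc)
    also have "\<dots> = of_int (k * int m)" using k by simp
    finally show "\<exists>k::int. q * of_nat N = of_int k" by blast
  qed
  have gap: "\<And>g q. g \<in> D \<Longrightarrow> q \<in> Q \<Longrightarrow> l g < of_rat q \<Longrightarrow> 1 / real N \<le> of_rat q - l g"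
  proof -
    fix g q assume gq: "g \<in> D" "q \<in> Q" "l g < of_rat q"
    then have "of_rat q - l g \<in> S" unfolding S_def by (auto intro!: image_eqI[where x="(g,q)"])
    then have "1 / real m \<le> of_rat q - l g" using m by blast
    moreover have "1 * m \<le> N1 * m" using N1 by (intro mult_le_mono1) simp
    then have "m \<le> N" unfolding N_def by simp
    then have "real m \<le> real N" by linarith
    then have "1 / real N \<le> 1 / real m" using m by (intro divide_left_mono) auto
    ultimately show "1 / real N \<le> of_rat q - l g" by linarith
  qed
  define Mx where "Mx = Max Q + 1"
  have QMx: "\<And>q. q \<in> Q \<Longrightarrow> q < Mx"
  proof -
    fix q assume "q \<in> Q"
    then have "q \<le> Max Q" using fQ by (simp add: Max_ge)
    then show "q < Mx" unfolding Mx_def by simp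
  qed
  have Mx0: "0 \<le> (of_rat Mx :: real)" using QMx[OF Q0] by (simp add: zero_le_of_rat_iff)
  obtain K where K: "K \<in> Lam" "0 \<le> K" "K \<le> of_rat Mx" "\<And>y. 0 \<le> y \<Longrightarrow> y \<le> K \<Longrightarrow> y \<in> Lam"
    "K = of_rat Mx \<or> (\<forall>x\<in>Lam. x \<le> K)"
    using K_exists[OF cl cv z Mx0] by blast
  define T where "T = {t. 0 \<le> t \<and> (\<exists>k::int. t * of_nat N = of_int k) \<and> of_rat t \<in> Lam \<and> t \<le> Mx}"
  have fT: "finite T"
  proof (rule finite_subset)
    show "T \<subseteq> (\<lambda>k. of_int k / of_nat N) ` {0..\<lceil>Mx * of_nat N\<rceil>}"
    proof
      fix t assume "t \<in> T"
      then obtain k where t: "0 \<le> t" "t * of_nat N = of_int k" "t \<le> Mx" unfolding T_def by blast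
      have tk: "t = of_int k / of_nat N" using t(2) Npos by (simp add: eq_divide_eq)
      have "0 \<le> t * of_nat N" using t(1) by simp
      then have k0: "0 \<le> k" using t(2) by simp
      have "t * of_nat N \<le> Mx * of_nat N" using t(3) by (simp add: mult_right_mono)
      then have "(of_int k :: rat) \<le> of_int \<lceil>Mx * of_nat N\<rceil>" using t(2) le_of_int_ceiling[of "Mx * of_nat N"] by linarith
      then have "k \<le> \<lceil>Mx * of_nat N\<rceil>" by (simp only: of_int_le_iff)
      then show "t \<in> (\<lambda>k. of_int k / of_nat N) ` {0..\<lceil>Mx * of_nat N\<rceil>}" using tk k0 by auto
    qed
  qed simp
  have TL: "\<forall>t\<in>T. of_rat t \<in> Lam" and T0: "\<forall>t\<in>T. t \<ge> 0" and TM: "\<forall>t\<in>T. t \<le> Mx"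
    unfolding T_def by auto
  have zT: "0 \<in> T" unfolding T_def using z QMx[OF Q0] by auto
  have QT: "Q \<subseteq> T" unfolding T_def using Qpos gridQ QL QMx by (auto intro: less_imp_le)
  have KT: "\<forall>t\<in>T. of_rat t \<le> K"
  proof
    fix t assume t: "t \<in> T"
    show "of_rat t \<le> K"
    proof (cases "K = of_rat Mx")
      case True then show ?thesis using TM t by (simp add: of_rat_less_eq)
    next
      case False then show ?thesis using K(5) TL t by blast
    qed
  qed
  have addT: "\<forall>t\<in>T. \<forall>t'\<in>T. t + t' \<notin> T \<longrightarrow> K \<le> of_rat (t + t')"
  proof (intro ballI impI)
    fix t t' assume t: "t \<in> T" and t': "t' \<in> T" and tt: "t + t' \<notin> T"
    obtain k where k: "t * of_nat N = of_int k" using t unfolding T_def by blast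
    obtain k' where k': "t' * of_nat N = of_int k'" using t' unfolding T_def by blast
    have "(t + t') * of_nat N = of_int (k + k')" using k k' by (simp add: distrib_right)
    moreover have "0 \<le> t + t'" using t t' T0 by auto
    ultimately have nn: "\<not> (of_rat (t + t') \<in> Lam \<and> t + t' \<le> Mx)" using tt unfolding T_def by blast
    have p0: "(0::real) \<le> of_rat (t + t')" using \<open>0 \<le> t + t'\<close> by (simp add: zero_le_of_rat_iff)
    show "K \<le> of_rat (t + t')"
    proof (cases "t + t' \<le> Mx")
      case True
      then have "of_rat (t + t') \<notin> Lam" using nn by blast
      then show ?thesis using K(4)[OF p0] by linarith
    next
      case False
      then have "(of_rat Mx::real) < of_rat (t + t')" by (simp add: of_rat_less)
      then show ?thesis using K(3) by linarith
    qed
  qed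
  define nD where "nD = card D"
  obtain hh where hh: "bij_betw hh {0..<nD} D" using ex_bij_betw_nat_finite[OF fD] nD_def by blast
  define idx where "idx = inv_into {0..<nD} hh"
  have idx: "\<And>g. g \<in> D \<Longrightarrow> idx g < nD \<and> hh (idx g) = g"
  proof -
    fix g assume g: "g \<in> D"
    have "hh ` {0..<nD} = D" using hh by (simp add: bij_betw_def)
    then have "idx g \<in> {0..<nD}" using g unfolding idx_def by (metis inv_into_into)
    moreover have "hh (idx g) = g" using bij_betw_inv_into_right[OF hh g] unfolding idx_def .
    ultimately show "idx g < nD \<and> hh (idx g) = g" by simp
  qed
  have hhD: "\<And>i. i < nD \<Longrightarrow> hh i \<in> D" using hh by (auto simp: bij_betw_def)
  have hhinj: "\<And>i j. i < nD \<Longrightarrow> j < nD \<Longrightarrow> hh i = hh j \<Longrightarrow> i = j"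
    using hh by (auto simp: bij_betw_def inj_on_def)
  define S1 where "S1 = {Eqt (Mul (Var i) (Var j)) (Var k) | i j k. i < nD \<and> j < nD \<and> k < nD \<and> hh i \<otimes>\<^bsub>G\<^esub> hh j = hh k}"
  define S2 where "S2 = {Neg (Eqt (Var i) (Var j)) | i j. i < nD \<and> j < nD \<and> i \<noteq> j}"
  define S3 where "S3 = {Rel c t (Var i) | c t i. i < nD \<and> t \<in> T \<and> cmpr c (l (hh i)) (of_rat t)}"
  have fin: "finite (S1 \<union> S2 \<union> S3)"
  proof -
    have a: "S1 \<subseteq> (\<lambda>(i,j,k). Eqt (Mul (Var i) (Var j)) (Var k)) ` ({..<nD} \<times> {..<nD} \<times> {..<nD})"
      unfolding S1_def image_def by force
    have b: "S2 \<subseteq> (\<lambda>(i,j). Neg (Eqt (Var i) (Var j))) ` ({..<nD} \<times> {..<nD})"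
      unfolding S2_def image_def by force
    have c: "S3 \<subseteq> (\<lambda>(c,t,i). Rel c t (Var i)) ` (UNIV \<times> T \<times> {..<nD})"
      unfolding S3_def image_def by force
    have fc: "finite (UNIV :: cmp set)" by (simp add: UNIV_cmp)
    have "finite S1" by (rule finite_subset[OF a]) simp
    moreover have "finite S2" by (rule finite_subset[OF b]) simp
    moreover have "finite S3" by (rule finite_subset[OF c]) (use fc fT in simp)
    ultimately show ?thesis by simp
  qed
  obtain xs where xs: "set xs = S1 \<union> S2 \<union> S3" using finite_list[OF fin] by blast
  define p where "p = conjs xs"
  have wf: "wf_qf Lam p" unfolding p_def wf_conjs xs S1_def S2_def S3_def using TL by auto
  define e where "e = (\<lambda>i. if i < nD then hh i else \<one>\<^bsub>G\<^esub>)"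
  have eG: "range e \<subseteq> carrier G" using hhD Dc G unfolding e_def
    by (auto simp: group.is_monoid monoid.one_closed)
  have exG: "ex_holds G (norm_pred l) p"
    unfolding ex_holds_def p_def sat_conjs xs
  proof (intro exI conjI ballI)
    show "range e \<subseteq> carrier G" by fact
    fix a assume "a \<in> S1 \<union> S2 \<union> S3"
    then show "sat_qf G (norm_pred l) e a" unfolding S1_def S2_def S3_def e_def
      using hhinj by (auto simp: norm_pred_def)
  qed
  obtain M :: "nat monoid" and PM where M: "finite (carrier M)" "model_IPMG Lam M PM" "ex_holds M PM p"
    using fmp wf exG unfolding fmp_exist_def by blast
  then obtain e' where e': "range e' \<subseteq> carrier M" and sat': "\<forall>a\<in>S1 \<union> S2 \<union> S3. sat_qf M PM e' a"
    unfolding ex_holds_def p_def sat_conjs xs by blast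
  have GM: "group M" using mI_group[OF M(2)] .
  define lC where "lC = lCdef PM T K"
  have lCn: "inv_pseudo_norm Lam M lC" unfolding lC_def
    by (rule model_norm[OF M(2) fT TL T0 zT K(1) KT addT])
  define \<phi> where "\<phi> = (\<lambda>g. if g \<in> D then e' (idx g) else \<one>\<^bsub>M\<^esub>)"
  have lek: "\<And>i t. i < nD \<Longrightarrow> t \<in> T \<Longrightarrow> le_pred PM t (e' i) \<longleftrightarrow> l (hh i) \<le> of_rat t"
  proof -
    fix i t assume i: "i < nD" and t: "t \<in> T"
    have x: "e' i \<in> carrier M" using e' by auto
    have at: "\<And>c. cmpr c (l (hh i)) (of_rat t) \<Longrightarrow> PM c t (e' i)"
    proof -
      fix c assume "cmpr c (l (hh i)) (of_rat t)"
      then have "Rel c t (Var i) \<in> S3" unfolding S3_def using i t by blast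
      then have "sat_qf M PM e' (Rel c t (Var i))" using sat' by blast
      then show "PM c t (e' i)" by simp
    qed
    show "le_pred PM t (e' i) \<longleftrightarrow> l (hh i) \<le> of_rat t"
    proof (cases "l (hh i) \<le> of_rat t")
      case True
      then have "cmpr Lt (l (hh i)) (of_rat t) \<or> cmpr EqC (l (hh i)) (of_rat t)" by auto
      then show ?thesis using at True unfolding le_pred_def by blast
    next
      case False
      then have "PM Gt t (e' i)" using at[of Gt] by simp
      then show ?thesis using mI_tri[OF M(2) x] t TL False by blast
    qed
  qed
  have lCx: "lC (e' i) = (if \<exists>t\<in>T. l (hh i) \<le> of_rat t then of_rat (Min {t\<in>T. l (hh i) \<le> of_rat t}) else K)"
    if i: "i < nD" for i
  proof -
    have s1: "{t\<in>T. le_pred PM t (e' i)} = {t\<in>T. l (hh i) \<le> of_rat t}" using lek[OF i] by auto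
    have s2: "(\<exists>t\<in>T. le_pred PM t (e' i)) = (\<exists>t\<in>T. l (hh i) \<le> of_rat t)" using lek[OF i] by auto
    show ?thesis unfolding lC_def lCdef_def s1 s2 ..
  qed
  show "\<exists>(C :: nat monoid) lC \<phi>. group C \<and> finite (carrier C) \<and> inv_pseudo_norm Lam C lC \<and>
         \<phi> \<in> carrier G \<rightarrow> carrier C \<and> inj_on \<phi> D \<and>
         (\<forall>h\<in>D. \<forall>g\<in>D. h \<otimes>\<^bsub>G\<^esub> g \<in> D \<longrightarrow> \<phi> (h \<otimes>\<^bsub>G\<^esub> g) = \<phi> h \<otimes>\<^bsub>C\<^esub> \<phi> g) \<and>
         (\<forall>g\<in>D. \<forall>q\<in>Q. \<forall>c. cmpr c (l g) (of_rat q) \<longleftrightarrow> cmpr c (lC (\<phi> g)) (of_rat q))"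
  proof (intro exI conjI)
    show "group M" by fact
    show "finite (carrier M)" by fact
    show "inv_pseudo_norm Lam M lC" by fact
    have e'c: "\<And>i. e' i \<in> carrier M" using e' by auto
    show "\<phi> \<in> carrier G \<rightarrow> carrier M" unfolding \<phi>_def using e'c GM
      by (auto simp: group.is_monoid monoid.one_closed)
    show "inj_on \<phi> D"
    proof (rule inj_onI)
      fix g g' assume g: "g \<in> D" "g' \<in> D" "\<phi> g = \<phi> g'"
      show "g = g'"
      proof (rule ccontr)
        assume ne: "g \<noteq> g'"
        then have "idx g \<noteq> idx g'" using idx g by metis
        then have "Neg (Eqt (Var (idx g)) (Var (idx g'))) \<in> S2" unfolding S2_def using idx g by blast
        then have "sat_qf M PM e' (Neg (Eqt (Var (idx g)) (Var (idx g'))))" using sat' by blast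
        then have "e' (idx g) \<noteq> e' (idx g')" by simp
        then show False using g unfolding \<phi>_def by simp
      qed
    qed
    show "\<forall>h\<in>D. \<forall>g\<in>D. h \<otimes>\<^bsub>G\<^esub> g \<in> D \<longrightarrow> \<phi> (h \<otimes>\<^bsub>G\<^esub> g) = \<phi> h \<otimes>\<^bsub>M\<^esub> \<phi> g"
    proof (intro ballI impI)
      fix h g assume h: "h \<in> D" and g: "g \<in> D" and hg: "h \<otimes>\<^bsub>G\<^esub> g \<in> D"
      have "hh (idx h) \<otimes>\<^bsub>G\<^esub> hh (idx g) = hh (idx (h \<otimes>\<^bsub>G\<^esub> g))" using idx h g hg by simp
      then have "Eqt (Mul (Var (idx h)) (Var (idx g))) (Var (idx (h \<otimes>\<^bsub>G\<^esub> g))) \<in> S1"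
        unfolding S1_def using idx h g hg by blast
      then have "sat_qf M PM e' (Eqt (Mul (Var (idx h)) (Var (idx g))) (Var (idx (h \<otimes>\<^bsub>G\<^esub> g))))" using sat' by blast
      then have "e' (idx h) \<otimes>\<^bsub>M\<^esub> e' (idx g) = e' (idx (h \<otimes>\<^bsub>G\<^esub> g))" by simp
      then show "\<phi> (h \<otimes>\<^bsub>G\<^esub> g) = \<phi> h \<otimes>\<^bsub>M\<^esub> \<phi> g" unfolding \<phi>_def using h g hg by simp
    qed
    show "\<forall>g\<in>D. \<forall>q\<in>Q. \<forall>c. cmpr c (l g) (of_rat q) \<longleftrightarrow> cmpr c (lC (\<phi> g)) (of_rat q)"
    proof (intro ballI allI)
      fix g q c assume g: "g \<in> D" and q: "q \<in> Q"
      define i where "i = idx g"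
      have i: "i < nD" "hh i = g" using idx g unfolding i_def by auto
      have phig: "\<phi> g = e' i" unfolding \<phi>_def i_def using g by simp
      define L where "L = l g"
      have L0: "0 \<le> L" "L \<in> Lam" using lpos lL Dc g unfolding L_def by auto
      have lc: "lC (\<phi> g) = (if \<exists>t\<in>T. L \<le> of_rat t then of_rat (Min {t\<in>T. L \<le> of_rat t}) else K)"
        using lCx[OF i(1)] phig i(2) unfolding L_def by simp
      have lower: "L \<le> lC (\<phi> g)" if ex: "\<exists>t\<in>T. L \<le> of_rat t"
      proof -
        have "Min {t\<in>T. L \<le> of_rat t} \<in> {t\<in>T. L \<le> of_rat t}" using ex fT by (intro Min_in) auto
        then show ?thesis using lc ex by simp
      qed
      have upper: "lC (\<phi> g) \<le> of_rat t" if t: "t \<in> T" "L \<le> of_rat t" for t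
      proof -
        have "Min {t\<in>T. L \<le> of_rat t} \<le> t" using t fT by (intro Min_le) auto
        then show ?thesis using lc t by (auto simp: of_rat_less_eq)
      qed
      show "cmpr c (l g) (of_rat q) \<longleftrightarrow> cmpr c (lC (\<phi> g)) (of_rat q)"
        unfolding L_def[symmetric]
      proof (rule cmpr_transfer)
        assume lt: "L < of_rat q"
        define t0 where "t0 = q - 1 / of_nat N"
        have rt0: "(of_rat t0 :: real) = of_rat q - 1 / real N" unfolding t0_def
          by (simp add: of_rat_diff of_rat_divide)
        have Lt0: "L \<le> of_rat t0" using gap[OF g q] lt rt0 unfolding L_def by simp
        have t0q: "(of_rat t0 :: real) < of_rat q" using rt0 Npos by simp
        have t0T: "t0 \<in> T"
        proof -
          obtain k where k: "q * of_nat N = of_int k" using gridQ q by blast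
          have "t0 * of_nat N = of_int (k - 1)" using k Npos unfolding t0_def by (simp add: field_simps)
          moreover have "(0::real) \<le> of_rat t0" using L0 Lt0 by linarith
          then have "0 \<le> t0" by (simp add: zero_le_of_rat_iff)
          moreover have "t0 \<le> q" unfolding t0_def using Npos by simp
          moreover have "of_rat t0 \<in> Lam"
            using Lam_interval[OF cv z QL[rule_format, OF q] \<open>0 \<le> of_rat t0\<close>] t0q by simp
          moreover have "t0 \<le> Mx" using QMx[OF q] \<open>t0 \<le> q\<close> by simp
          ultimately show ?thesis unfolding T_def by blast
        qed
        show "lC (\<phi> g) < of_rat q" using upper[OF t0T Lt0] t0q by linarith
      next
        assume eq: "L = of_rat q"
        have qT: "q \<in> T" using QT q by blast
        then have "lC (\<phi> g) \<le> of_rat q" "L \<le> lC (\<phi> g)" using upper lower eq by auto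
        then show "lC (\<phi> g) = of_rat q" using eq by linarith
      next
        assume gt: "L > of_rat q"
        show "lC (\<phi> g) > of_rat q"
        proof (cases "\<exists>t\<in>T. L \<le> of_rat t")
          case True then show ?thesis using lower gt by fastforce
        next
          case False
          then have lK: "lC (\<phi> g) = K" using lc by simp
          have "K > of_rat q"
          proof (cases "K = of_rat Mx")
            case True then show ?thesis using QMx[OF q] by (simp add: of_rat_less)
          next
            case False then have "L \<le> K" using K(5) L0 by blast
            then show ?thesis using gt by linarith
          qed
          then show ?thesis using lK by simp
        qed
      qed
    qed
  qed
qed


lemma fmp_IMG_IPMG:
  "fmp_exist Lam (model_IMG Lam) G P \<Longrightarrow> fmp_exist Lam (model_IPMG Lam) G P"
  unfolding fmp_exist_def model_IMG_def by blast

theorem mainTheorem18: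
  fixes Lam :: "real set" and G :: "'a monoid" and l :: "'a \<Rightarrow> real"
  assumes "closed Lam" and "convex Lam" and "Lam \<subseteq> {0..}" and "0 \<in> Lam"
    and "group G" and "inv_pseudo_norm Lam G l"
  shows "(metrically_LEF Lam G l \<longleftrightarrow> fmp_exist Lam (model_IPMG Lam) G (norm_pred l))
       \<and> (is_norm_on G l \<longrightarrow>
            (metrically_LEF Lam G l \<longleftrightarrow> fmp_exist Lam (model_IMG Lam) G (norm_pred l)))"
proof (intro conjI impI iffI)
  assume "metrically_LEF Lam G l"
  then show "fmp_exist Lam (model_IPMG Lam) G (norm_pred l)"
    using lef_fmp[OF assms(5,6,3)] by blast
next
  assume "fmp_exist Lam (model_IPMG Lam) G (norm_pred l)"
  then show "metrically_LEF Lam G l" using fmp_lef[OF assms] by blast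
next
  assume "is_norm_on G l" "metrically_LEF Lam G l"
  then show "fmp_exist Lam (model_IMG Lam) G (norm_pred l)"
    using lef_fmp_IMG[OF assms(5,6,3)] by blast
next
  assume "fmp_exist Lam (model_IMG Lam) G (norm_pred l)"
  then show "metrically_LEF Lam G l" using fmp_lef[OF assms] fmp_IMG_IPMG by blast
qed

end
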